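(* Let $m\in\mathbb N$ and let $(a_{\gamma,\delta})_{|\gamma|+|\delta|=m}$ be a family of complex numbers. If for some $\epsilon_0>0$ it holds that $\hat{\mathcal L}_{\epsilon_0}(\theta)\ne0$ for all $\theta\in\widehat\Lambda_{\epsilon_0}\setminus\{0\}$, then for every $\epsilon>0$ it holds that $\hat{\mathcal L}_\epsilon(\theta)\ne0$ for all $\theta\in\widehat\Lambda_\epsilon\setminus\{0\}$.
   Context: Fix a scaling $\mathfrak s\in\mathbb N^d$; for $\gamma\in\mathbb N_0^d$, $|\gamma|:=\sum_i\mathfrak s_i\gamma_i$. For $\epsilon>0$, $\widehat\Lambda_\epsilon:=\prod_{j=1}^d\mathbb R/(2\pi\epsilon^{-\mathfrak s_j}\mathbb Z)$ (the dual group of $\epsilon^{\mathfrak s_1}\mathbb Z\times\cdots\times\epsilon^{\mathfrak s_d}\mathbb Z$). For $\theta\in\widehat\Lambda_\epsilon$, $\xi^\epsilon_{\theta,j}:=i\epsilon^{-\mathfrak s_j}(1-e^{i\epsilon^{\mathfrak s_j}\theta_j})$, $(\xi^\epsilon_\theta)^\gamma:=\prod_j(\xi^\epsilon_{\theta,j})^{\gamma_j}$, and $\hat{\mathcal L}_\epsilon(\theta):=\sum_{|\gamma|+|\delta|=m}a_{\gamma,\delta}(i\xi^\epsilon_\theta)^\gamma(i\overline{\xi^\epsilon_\theta})^\delta$. *)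

theory Defs
  imports Complex_Main
begin

text \<open>Dimension d; vectors/multi-indices in N^d are functions nat => _ ,
  only the components i < d matter. Scaling s :: nat => nat with s i >= 1 for i < d.\<close>

definition multi_indices :: "nat \<Rightarrow> (nat \<Rightarrow> nat) set" where
  "multi_indices d = {\<gamma>. \<forall>i\<ge>d. \<gamma> i = 0}"

definition sdeg :: "nat \<Rightarrow> (nat \<Rightarrow> nat) \<Rightarrow> (nat \<Rightarrow> nat) \<Rightarrow> nat" where
  "sdeg d s \<gamma> = (\<Sum>i<d. s i * \<gamma> i)"

definition index_pairs :: "nat \<Rightarrow> (nat \<Rightarrow> nat) \<Rightarrow> nat \<Rightarrow> ((nat \<Rightarrow> nat) \<times> (nat \<Rightarrow> nat)) set" where
  "index_pairs d s m = {(\<gamma>, \<delta>). \<gamma> \<in> multi_indices d \<and> \<delta> \<in> multi_indices d \<and>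
      sdeg d s \<gamma> + sdeg d s \<delta> = m}"

definition xi_eps :: "(nat \<Rightarrow> nat) \<Rightarrow> real \<Rightarrow> (nat \<Rightarrow> real) \<Rightarrow> nat \<Rightarrow> complex" where
  "xi_eps s \<epsilon> \<theta> j = \<i> * complex_of_real (\<epsilon> powi (- int (s j)))
      * (1 - exp (\<i> * complex_of_real (\<epsilon> ^ s j * \<theta> j)))"

definition L_hat :: "nat \<Rightarrow> (nat \<Rightarrow> nat) \<Rightarrow> nat \<Rightarrow> ((nat \<Rightarrow> nat) \<Rightarrow> (nat \<Rightarrow> nat) \<Rightarrow> complex)
    \<Rightarrow> real \<Rightarrow> (nat \<Rightarrow> real) \<Rightarrow> complex" where
  "L_hat d s m a \<epsilon> \<theta> = (\<Sum>(\<gamma>, \<delta>) \<in> index_pairs d s m.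
      a \<gamma> \<delta> * (\<Prod>j<d. (\<i> * xi_eps s \<epsilon> \<theta> j) ^ \<gamma> j)
            * (\<Prod>j<d. (\<i> * cnj (xi_eps s \<epsilon> \<theta> j)) ^ \<delta> j))"

text \<open>theta (a representative in R^d) is nonzero in the dual torus
  prod_j R/(2 pi eps^{-s_j} Z).\<close>
definition torus_nonzero :: "nat \<Rightarrow> (nat \<Rightarrow> nat) \<Rightarrow> real \<Rightarrow> (nat \<Rightarrow> real) \<Rightarrow> bool" where
  "torus_nonzero d s \<epsilon> \<theta> \<longleftrightarrow>
     (\<exists>j<d. \<theta> j \<notin> {2 * pi * \<epsilon> powi (- int (s j)) * of_int k | k. True})"

end

theory Submission
  imports Defs
begin

lemma xi_scale:
  fixes e0 e :: real
  assumes "e0 > 0" "e > 0"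
  shows "xi_eps s e0 (\<lambda>j. (e/e0)^s j * \<theta> j) j = complex_of_real ((e/e0)^s j) * xi_eps s e \<theta> j"
proof -
  have 1: "e0 ^ s j * ((e/e0)^s j * \<theta> j) = e ^ s j * \<theta> j"
    using assms by (simp add: power_divide field_simps)
  have 2: "e0 powi (- int (s j)) = (e/e0)^s j * e powi (- int (s j))"
    using assms by (simp add: power_int_minus power_divide field_simps)
  show ?thesis unfolding xi_eps_def 1 2 by (simp add: algebra_simps)
qed

lemma prod_scale:
  fixes c :: real and x :: "nat \<Rightarrow> complex"
  shows "(\<Prod>j<d. (complex_of_real (c ^ s j) * x j) ^ g j)
     = complex_of_real (c ^ sdeg d s g) * (\<Prod>j<d. x j ^ g j)"
proof -
  have "(\<Prod>j<d. (complex_of_real (c ^ s j) * x j) ^ g j)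
      = (\<Prod>j<d. complex_of_real (c ^ (s j * g j))) * (\<Prod>j<d. x j ^ g j)"
    by (simp add: power_mult_distrib prod.distrib power_mult)
  also have "(\<Prod>j<d. complex_of_real (c ^ (s j * g j))) = complex_of_real (c ^ sdeg d s g)"
    by (simp add: sdeg_def power_sum)
  finally show ?thesis .
qed

lemma L_scale:
  fixes e0 e :: real
  assumes "e0 > 0" "e > 0"
  shows "L_hat d s m a e0 (\<lambda>j. (e/e0)^s j * \<theta> j) = complex_of_real ((e/e0)^m) * L_hat d s m a e \<theta>"
proof -
  let ?c = "e/e0"
  have A: "\<And>j. \<i> * xi_eps s e0 (\<lambda>j. ?c^s j * \<theta> j) j = complex_of_real (?c^s j) * (\<i> * xi_eps s e \<theta> j)"
    using xi_scale[OF assms] by simp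
  have B: "\<And>j. \<i> * cnj (xi_eps s e0 (\<lambda>j. ?c^s j * \<theta> j) j) = complex_of_real (?c^s j) * (\<i> * cnj (xi_eps s e \<theta> j))"
    using xi_scale[OF assms] by simp
  have "L_hat d s m a e0 (\<lambda>j. ?c^s j * \<theta> j) = (\<Sum>(g, h) \<in> index_pairs d s m.
      complex_of_real (?c^m) * (a g h * (\<Prod>j<d. (\<i> * xi_eps s e \<theta> j) ^ g j)
            * (\<Prod>j<d. (\<i> * cnj (xi_eps s e \<theta> j)) ^ h j)))"
    unfolding L_hat_def A B prod_scale
  proof (rule sum.cong[OF refl], clarify)
    fix g h assume "(g, h) \<in> index_pairs d s m"
    then have m: "sdeg d s g + sdeg d s h = m" by (simp add: index_pairs_def)
    show "a g h * (complex_of_real (?c ^ sdeg d s g) * (\<Prod>j<d. (\<i> * xi_eps s e \<theta> j) ^ g j)) *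
       (complex_of_real (?c ^ sdeg d s h) * (\<Prod>j<d. (\<i> * cnj (xi_eps s e \<theta> j)) ^ h j)) =
       complex_of_real (?c ^ m) * (a g h * (\<Prod>j<d. (\<i> * xi_eps s e \<theta> j) ^ g j) * (\<Prod>j<d. (\<i> * cnj (xi_eps s e \<theta> j)) ^ h j))"
      by (simp add: m[symmetric] power_add algebra_simps)
  qed
  also have "\<dots> = complex_of_real (?c^m) * L_hat d s m a e \<theta>"
    unfolding L_hat_def by (simp add: sum_distrib_left case_prod_unfold)
  finally show ?thesis .
qed

lemma torus_scale:
  fixes e0 e :: real
  assumes "e0 > 0" "e > 0" "torus_nonzero d s e \<theta>"
  shows "torus_nonzero d s e0 (\<lambda>j. (e/e0)^s j * \<theta> j)"
proof -
  from assms(3) obtain j where j: "j < d" and nt: "\<forall>k. \<theta> j \<noteq> 2 * pi * e powi (- int (s j)) * of_int k"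
    unfolding torus_nonzero_def by blast
  have "(e/e0)^s j * \<theta> j \<noteq> 2 * pi * e0 powi (- int (s j)) * of_int k" for k
  proof
    assume h: "(e/e0)^s j * \<theta> j = 2 * pi * e0 powi (- int (s j)) * of_int k"
    have "\<theta> j = 2 * pi * e powi (- int (s j)) * of_int k"
      using h assms(1,2) by (simp add: power_int_minus power_divide field_simps)
    with nt show False by blast
  qed
  with j show ?thesis unfolding torus_nonzero_def by blast
qed

theorem lemma3p9:
  fixes d m :: nat and s :: "nat \<Rightarrow> nat"
    and a :: "(nat \<Rightarrow> nat) \<Rightarrow> (nat \<Rightarrow> nat) \<Rightarrow> complex" and \<epsilon>\<^sub>0 :: real
  assumes "\<forall>i<d. s i \<ge> 1"
    and "m \<ge> 1"
    and "\<epsilon>\<^sub>0 > 0"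
    and "\<forall>\<theta>. torus_nonzero d s \<epsilon>\<^sub>0 \<theta> \<longrightarrow> L_hat d s m a \<epsilon>\<^sub>0 \<theta> \<noteq> 0"
  shows "\<forall>\<epsilon>>0. \<forall>\<theta>. torus_nonzero d s \<epsilon> \<theta> \<longrightarrow> L_hat d s m a \<epsilon> \<theta> \<noteq> 0"
proof (intro allI impI)
  fix \<epsilon> :: real and \<theta> assume e: "\<epsilon> > 0" and t: "torus_nonzero d s \<epsilon> \<theta>"
  have "L_hat d s m a \<epsilon>\<^sub>0 (\<lambda>j. (\<epsilon>/\<epsilon>\<^sub>0)^s j * \<theta> j) \<noteq> 0"
    using assms(4) torus_scale[OF assms(3) e t] by blast
  then show "L_hat d s m a \<epsilon> \<theta> \<noteq> 0"
    unfolding L_scale[OF assms(3) e] by simp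
qed

end
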